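(* Let $(R,d,P)$ be a commutative differential Rota–Baxter algebra of weight $\lambda$ over a commutative ring $\mathbf{k}$. For $u,v\in R$ put $\phi(u,v):=P(d(u)P(v))-uP(v)+P(uv)+\lambda P(d(u)v)$. Then for all $u,v,w\in R$: (1) $d(\phi(u,v))=0$; (2) $\phi(u,v)P(w)=P(\phi(u,v)w)+\phi(u,wP(v))+\phi(u,vP(w))+\lambda\,\phi(u,vw)$.
   Context: A commutative differential Rota–Baxter algebra of weight $\lambda\in\mathbf{k}$ is a commutative $\mathbf{k}$-algebra $R$ with linear maps $d,P:R\to R$ such that $d(1)=0$, $d(uv)=d(u)v+ud(v)+\lambda d(u)d(v)$, $P(u)P(v)=P(uP(v))+P(P(u)v)+\lambda P(uv)$, and $d\circ P=\mathrm{id}_R$. *)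

theory Defs
  imports Main
begin

text \<open>A commutative k-algebra R is modelled as a commutative ring 'a together with
  a unital ring homomorphism iota : k -> R (the structure map); the scalar action
  is c . u = iota c * u.\<close>

definition algebra_map :: "('k::comm_ring_1 \<Rightarrow> 'a::comm_ring_1) \<Rightarrow> bool" where
  "algebra_map iota \<longleftrightarrow> iota 1 = 1 \<and> (\<forall>x y. iota (x + y) = iota x + iota y)
     \<and> (\<forall>x y. iota (x * y) = iota x * iota y)"

definition k_linear :: "('k::comm_ring_1 \<Rightarrow> 'a::comm_ring_1) \<Rightarrow> ('a \<Rightarrow> 'a) \<Rightarrow> bool" where
  "k_linear iota f \<longleftrightarrow> (\<forall>u v. f (u + v) = f u + f v) \<and> (\<forall>c u. f (iota c * u) = iota c * f u)"

definition diff_RB_algebra ::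
  "('k::comm_ring_1 \<Rightarrow> 'a::comm_ring_1) \<Rightarrow> 'k \<Rightarrow> ('a \<Rightarrow> 'a) \<Rightarrow> ('a \<Rightarrow> 'a) \<Rightarrow> bool" where
  "diff_RB_algebra iota lam d P \<longleftrightarrow>
     algebra_map iota \<and> k_linear iota d \<and> k_linear iota P \<and>
     d 1 = 0 \<and>
     (\<forall>u v. d (u * v) = d u * v + u * d v + iota lam * (d u * d v)) \<and>
     (\<forall>u v. P u * P v = P (u * P v) + P (P u * v) + iota lam * P (u * v)) \<and>
     (\<forall>u. d (P u) = u)"

definition phi ::
  "('k::comm_ring_1 \<Rightarrow> 'a::comm_ring_1) \<Rightarrow> 'k \<Rightarrow> ('a \<Rightarrow> 'a) \<Rightarrow> ('a \<Rightarrow> 'a) \<Rightarrow> 'a \<Rightarrow> 'a \<Rightarrow> 'a" where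
  "phi iota lam d P u v = P (d u * P v) - u * P v + P (u * v) + iota lam * P (d u * v)"

end

theory Submission
  imports Defs
begin

theorem mainTheorem6:
  fixes iota :: "'k::comm_ring_1 \<Rightarrow> 'a::comm_ring_1"
    and lam :: 'k and d P :: "'a \<Rightarrow> 'a"
  assumes "diff_RB_algebra iota lam d P"
  shows "\<forall>u v w.
           d (phi iota lam d P u v) = 0 \<and>
           phi iota lam d P u v * P w =
             P (phi iota lam d P u v * w) + phi iota lam d P u (w * P v)
             + phi iota lam d P u (v * P w) + iota lam * phi iota lam d P u (v * w)"
proof -
  let ?l = "iota lam"
  have Padd: "\<And>a b. P (a + b) = P a + P b"
   and Psc: "\<And>a. P (?l * a) = ?l * P a"
   and dadd: "\<And>a b. d (a + b) = d a + d b"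
   and dsc: "\<And>a. d (?l * a) = ?l * d a"
   and dmul: "\<And>u v. d (u * v) = d u * v + u * d v + ?l * (d u * d v)"
   and RB: "\<And>u v. P u * P v = P (u * P v) + P (P u * v) + ?l * P (u * v)"
   and dP: "\<And>u. d (P u) = u"
    using assms unfolding diff_RB_algebra_def k_linear_def by auto
  have Pdiff: "\<And>a b. P (a - b) = P a - P b"
    by (metis Padd diff_add_cancel eq_diff_eq)
  have ddiff: "\<And>a b. d (a - b) = d a - d b"
    by (metis dadd diff_add_cancel eq_diff_eq)
  define psi where "psi x = P (d x) - x" for x
  have psi_add: "psi (a + b) = psi a + psi b" for a b
    unfolding psi_def by (simp add: dadd Padd)
  have psi_sc: "psi (?l * a) = ?l * psi a" for a
    unfolding psi_def by (simp add: dsc Psc right_diff_distrib)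
  have A: "phi iota lam d P u v = psi (u * P v)" for u v
    unfolding phi_def psi_def
    by (simp add: dmul dP Padd distrib_left mult.assoc Psc[symmetric] del: Psc)
  have dpsi: "d (psi x) = 0" for x
    unfolding psi_def by (simp add: ddiff dP)
  have B: "psi x * P w = P (psi x * w) + psi (x * P w)" for x w
  proof -
    have "psi x * P w = P (d x) * P w - x * P w" unfolding psi_def by (simp add: algebra_simps)
    also have "\<dots> = P (d x * P w) + P (P (d x) * w) + ?l * P (d x * w) - x * P w"
      by (simp add: RB)
    also have "P (P (d x) * w) = P (psi x * w) + P (x * w)"
      unfolding psi_def by (simp add: Padd[symmetric] algebra_simps)
    finally show ?thesis
      unfolding psi_def
      by (simp add: dmul dP Padd distrib_left mult.assoc Psc[symmetric] del: Psc)
  qed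
  show ?thesis
  proof (intro allI conjI)
    fix u v w
    show "d (phi iota lam d P u v) = 0" by (simp add: A dpsi)
    have "phi iota lam d P u (w * P v) + phi iota lam d P u (v * P w) + ?l * phi iota lam d P u (v * w)
        = psi (u * P v * P w)"
      by (simp add: A psi_add[symmetric] psi_sc[symmetric] RB algebra_simps Psc)
    moreover have "phi iota lam d P u v * P w = P (phi iota lam d P u v * w) + psi (u * P v * P w)"
      by (simp add: A B)
    ultimately show "phi iota lam d P u v * P w =
             P (phi iota lam d P u v * w) + phi iota lam d P u (w * P v)
             + phi iota lam d P u (v * P w) + iota lam * phi iota lam d P u (v * w)"
      by (simp add: add.assoc)
  qed
qed

end
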